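(* Let $\rho_1, \rho_2$ be $N \times N$ density matrices (positive semidefinite complex matrices with unit trace), let $P_+$ be the orthogonal projector onto the span of the eigenvectors of $\rho_1-\rho_2$ with positive eigenvalues, and $P_-$ the orthogonal projector onto the span of the eigenvectors of $\rho_1-\rho_2$ with negative eigenvalues. Let $I$ denote the $N\times N$ identity matrix. Then $$\mathrm{tr}\,P_+(I-\rho_1)\rho_1 \ge \mathrm{tr}\,P_+(I-\rho_1)\rho_2,$$ $$\mathrm{tr}\,P_-\rho_1(I-\rho_1) \ge \mathrm{tr}\,P_-\rho_1(I-\rho_2),$$ $$\mathrm{tr}\,P_+(I-\rho_2)\rho_2 \ge \mathrm{tr}\,P_+(I-\rho_1)\rho_2,$$ $$\mathrm{tr}\,P_-\rho_2(I-\rho_2) \ge \mathrm{tr}\,P_-\rho_1(I-\rho_2).$$ *)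

theory Defs
  imports "Jordan_Normal_Form.Matrix_Kernel" "Jordan_Normal_Form.Char_Poly"
    "Jordan_Normal_Form.Schur_Decomposition"
begin

definition mtrace :: "complex mat \<Rightarrow> complex" where
  "mtrace A = (\<Sum>i\<in>{0..<dim_row A}. A $$ (i, i))"

definition cspan :: "nat \<Rightarrow> complex vec set \<Rightarrow> complex vec set" where
  "cspan n S = LinearCombinations.module.span class_ring (module_vec TYPE(complex) n) S"

text \<open>Positive semidefinite: Hermitian and nonnegative quadratic form
  (the order on complex is the one from HOL-Library.Complex_Order, so 0 \<le> z means z is real and nonnegative).\<close>
definition psd_mat :: "nat \<Rightarrow> complex mat \<Rightarrow> bool" where
  "psd_mat n A \<longleftrightarrow> A \<in> carrier_mat n n \<and> mat_adjoint A = A \<and>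
     (\<forall>v \<in> carrier_vec n. 0 \<le> conjugate v \<bullet> (A *\<^sub>v v))"

definition density_mat :: "nat \<Rightarrow> complex mat \<Rightarrow> bool" where
  "density_mat n A \<longleftrightarrow> psd_mat n A \<and> mtrace A = 1"

definition orth_projector :: "nat \<Rightarrow> complex mat \<Rightarrow> bool" where
  "orth_projector n P \<longleftrightarrow> P \<in> carrier_mat n n \<and> P * P = P \<and> mat_adjoint P = P"

definition projector_onto_eigvecs ::
  "nat \<Rightarrow> complex mat \<Rightarrow> (complex \<Rightarrow> bool) \<Rightarrow> complex mat \<Rightarrow> bool" where
  "projector_onto_eigvecs n A Q P \<longleftrightarrow> orth_projector n P \<and>
     {P *\<^sub>v x | x. x \<in> carrier_vec n} = cspan n {v. \<exists>k. Q k \<and> eigenvector A v k}"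

end

theory Submission
  imports Defs
begin
lemma adj_dims[simp]: "dim_row (mat_adjoint A) = dim_col A" "dim_col (mat_adjoint A) = dim_row A"
  unfolding mat_adjoint_def by (auto simp: mat_of_rows_def)
lemma adj_index[simp]: "i < dim_col A \<Longrightarrow> j < dim_row A \<Longrightarrow> mat_adjoint A $$ (i,j) = conjugate (A $$ (j,i))"
  unfolding mat_adjoint_def by (auto simp: mat_of_rows_def)
lemma adj_carrier[simp]: "A \<in> carrier_mat n m \<Longrightarrow> mat_adjoint A \<in> carrier_mat m n"
  unfolding carrier_mat_def by simp
lemma adj_adj[simp]: "mat_adjoint (mat_adjoint (A :: complex mat)) = A"
proof (rule eq_matI)
  fix i j assume "i < dim_row A" "j < dim_col A"
  then show "mat_adjoint (mat_adjoint A) $$ (i, j) = A $$ (i, j)" by simp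
qed simp_all
lemma adj_mult: fixes A B :: "complex mat"
  assumes A: "A \<in> carrier_mat n m" and B: "B \<in> carrier_mat m k"
  shows "mat_adjoint (A * B) = mat_adjoint B * mat_adjoint A"
proof (rule eq_matI)
  fix i j assume i: "i < dim_row (mat_adjoint B * mat_adjoint A)" and j: "j < dim_col (mat_adjoint B * mat_adjoint A)"
  have i': "i < k" and j': "j < n" using i j A B by auto
  have "mat_adjoint (A * B) $$ (i,j) = cnj (\<Sum>l\<in>{0..<m}. A $$ (j,l) * B $$ (l,i))"
    using i' j' A B by (simp add: scalar_prod_def row_def col_def)
  also have "\<dots> = (\<Sum>l\<in>{0..<m}. cnj (B $$ (l,i)) * cnj (A $$ (j,l)))"
    by (simp add: mult.commute)
  also have "\<dots> = (mat_adjoint B * mat_adjoint A) $$ (i,j)"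
    using i' j' A B by (simp add: scalar_prod_def row_def col_def)
  finally show "mat_adjoint (A * B) $$ (i,j) = (mat_adjoint B * mat_adjoint A) $$ (i,j)" .
qed (use A B in simp_all)

lemma adj_one[simp]: "mat_adjoint (1\<^sub>m n :: complex mat) = 1\<^sub>m n"
  by (rule eq_matI) simp_all

lemma adj_zero[simp]: "mat_adjoint (0\<^sub>m n m :: complex mat) = 0\<^sub>m m n"
  by (rule eq_matI) simp_all

lemma adj_minus: fixes A B :: "complex mat"
  assumes "A \<in> carrier_mat n m" "B \<in> carrier_mat n m"
  shows "mat_adjoint (A - B) = mat_adjoint A - mat_adjoint B"
  by (rule eq_matI) (use assms in simp_all)

lemma adj_four_block: fixes A B C D :: "complex mat"
  assumes "A \<in> carrier_mat n1 m1" "B \<in> carrier_mat n1 m2" "C \<in> carrier_mat n2 m1" "D \<in> carrier_mat n2 m2"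
  shows "mat_adjoint (four_block_mat A B C D) = four_block_mat (mat_adjoint A) (mat_adjoint C) (mat_adjoint B) (mat_adjoint D)"
  by (rule eq_matI) (use assms in simp_all)
lemma adj_sprod: fixes A :: "complex mat"
  assumes A: "A \<in> carrier_mat n m" and u: "u \<in> carrier_vec n" and y: "y \<in> carrier_vec m"
  shows "conjugate u \<bullet> (A *\<^sub>v y) = conjugate (mat_adjoint A *\<^sub>v u) \<bullet> y"
proof -
  have "conjugate u \<bullet> (A *\<^sub>v y) = (\<Sum>i\<in>{0..<n}. cnj (u$i) * (\<Sum>j\<in>{0..<m}. A $$ (i,j) * y $ j))"
    using A u y by (simp add: scalar_prod_def row_def)
  also have "\<dots> = (\<Sum>i\<in>{0..<n}. \<Sum>j\<in>{0..<m}. cnj (u$i) * A $$ (i,j) * y $ j)"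
    by (simp add: sum_distrib_left mult.assoc)
  also have "\<dots> = (\<Sum>j\<in>{0..<m}. \<Sum>i\<in>{0..<n}. cnj (u$i) * A $$ (i,j) * y $ j)"
    by (rule sum.swap)
  also have "\<dots> = (\<Sum>j\<in>{0..<m}. (\<Sum>i\<in>{0..<n}. cnj (u$i) * A $$ (i,j)) * y $ j)"
    by (simp add: sum_distrib_right)
  also have "\<dots> = conjugate (mat_adjoint A *\<^sub>v u) \<bullet> y"
    using A u y by (simp add: scalar_prod_def row_def mult.commute)
  finally show ?thesis .
qed

lemma mtrace_comm: fixes A B :: "complex mat"
  assumes A: "A \<in> carrier_mat n m" and B: "B \<in> carrier_mat m n"
  shows "mtrace (A * B) = mtrace (B * A)"
proof -
  have "mtrace (A * B) = (\<Sum>i\<in>{0..<n}. \<Sum>j\<in>{0..<m}. A $$ (i,j) * B $$ (j,i))"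
    using A B by (simp add: mtrace_def scalar_prod_def row_def col_def)
  also have "\<dots> = (\<Sum>j\<in>{0..<m}. \<Sum>i\<in>{0..<n}. A $$ (i,j) * B $$ (j,i))"
    by (rule sum.swap)
  also have "\<dots> = mtrace (B * A)"
    using A B by (simp add: mtrace_def scalar_prod_def row_def col_def mult.commute)
  finally show ?thesis .
qed

lemma mtrace_minus: fixes A B :: "complex mat"
  assumes A: "A \<in> carrier_mat n n" and B: "B \<in> carrier_mat n n"
  shows "mtrace (A - B) = mtrace A - mtrace B"
  using A B by (simp add: mtrace_def sum_subtractf)

definition unitary :: "nat \<Rightarrow> complex mat \<Rightarrow> bool" where
  "unitary n U \<longleftrightarrow> U \<in> carrier_mat n n \<and> mat_adjoint U * U = 1\<^sub>m n \<and> U * mat_adjoint U = 1\<^sub>m n"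

definition nrm :: "complex vec \<Rightarrow> complex vec" where
  "nrm w = complex_of_real (1 / sqrt (Re (w \<bullet>c w))) \<cdot>\<^sub>v w"

lemma nrm_carrier[simp]: "w \<in> carrier_vec n \<Longrightarrow> nrm w \<in> carrier_vec n"
  unfolding nrm_def by simp

lemma cprod_smult: fixes v w :: "complex vec"
  assumes "v \<in> carrier_vec n" "w \<in> carrier_vec n"
  shows "(a \<cdot>\<^sub>v v) \<bullet>c (b \<cdot>\<^sub>v w) = a * cnj b * (v \<bullet>c w)"
  using assms by (simp add: conjugate_smult_vec)

lemma cprod_self_real: fixes w :: "complex vec"
  assumes "w \<in> carrier_vec n" "w \<noteq> 0\<^sub>v n"
  shows "w \<bullet>c w = complex_of_real (Re (w \<bullet>c w))" "Re (w \<bullet>c w) > 0"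
proof -
  have "w \<bullet>c w > 0" using assms conjugate_square_greater_0_vec by blast
  then show "w \<bullet>c w = complex_of_real (Re (w \<bullet>c w))" "Re (w \<bullet>c w) > 0"
    by (auto simp: less_complex_def complex_eq_iff)
qed

lemma nrm_self: fixes w :: "complex vec"
  assumes w: "w \<in> carrier_vec n" "w \<noteq> 0\<^sub>v n"
  shows "nrm w \<bullet>c nrm w = 1"
proof -
  define r where "r = Re (w \<bullet>c w)"
  have r: "w \<bullet>c w = complex_of_real r" "r > 0" using cprod_self_real[OF w] by (auto simp: r_def)
  have "nrm w \<bullet>c nrm w = complex_of_real (1 / sqrt r) * cnj (complex_of_real (1 / sqrt r)) * complex_of_real r"
    unfolding nrm_def r_def[symmetric] by (simp only: cprod_smult[OF w(1) w(1)] r(1))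
  also have "\<dots> = complex_of_real (1 / sqrt r * (1 / sqrt r) * r)" by (simp only: of_real_mult complex_cnj_complex_of_real)
  also have "1 / sqrt r * (1 / sqrt r) * r = 1" using r(2)
    by (simp add: field_simps)
  finally show ?thesis by simp
qed

lemma nrm_id: fixes w :: "complex vec"
  assumes "w \<in> carrier_vec n" "w \<bullet>c w = 1"
  shows "nrm w = w"
  using assms unfolding nrm_def by simp

lemma adj_mult_self_entry: fixes W :: "complex mat"
  assumes W: "W \<in> carrier_mat n m" and i: "i < m" and j: "j < m"
  shows "(mat_adjoint W * W) $$ (i,j) = col W j \<bullet>c col W i"
  using W i j by (simp add: scalar_prod_def row_def col_def mult.commute)

lemma unitary_schur: fixes A :: "complex mat"
  assumes "A \<in> carrier_mat n n"
  shows "\<exists>P T. unitary n P \<and> T \<in> carrier_mat n n \<and> upper_triangular T \<and> A = P * T * mat_adjoint P"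
  using assms
proof (induct n arbitrary: A)
  case 0
  have "A = 1\<^sub>m 0 * A * mat_adjoint (1\<^sub>m 0)" using 0 by (intro eq_matI) auto
  moreover have "unitary 0 (1\<^sub>m 0)" unfolding unitary_def by simp
  moreover have "upper_triangular A" using 0 unfolding upper_triangular_def by simp
  ultimately show ?case using 0 by blast
next
  case (Suc m A)
  let ?n = "Suc m"
  have A: "A \<in> carrier_mat ?n ?n" by fact
  from char_poly_factorized[OF A] obtain as where cp: "char_poly A = (\<Prod>a\<leftarrow>as. [:-a,1:])"
    and len: "length as = ?n" by auto
  then obtain e es where as: "as = e # es" by (cases as) auto
  have ev: "eigenvalue A e" unfolding eigenvalue_root_char_poly[OF A] cp as by simp
  define v0 where "v0 = find_eigenvector A e"
  from find_eigenvector[OF A ev] have "eigenvector A v0 e" unfolding v0_def .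
  then have v0: "v0 \<in> carrier_vec ?n" "v0 \<noteq> 0\<^sub>v ?n" "A *\<^sub>v v0 = e \<cdot>\<^sub>v v0"
    using A unfolding eigenvector_def by auto
  define v where "v = nrm v0"
  have v: "v \<in> carrier_vec ?n" unfolding v_def using v0 by simp
  have vv: "v \<bullet>c v = 1" unfolding v_def using nrm_self[OF v0(1,2)] .
  have vnz: "v \<noteq> 0\<^sub>v ?n"
  proof
    assume "v = 0\<^sub>v ?n"
    then have "v \<bullet>c v = 0" by simp
    then show False using vv by simp
  qed
  have ev_v: "A *\<^sub>v v = e \<cdot>\<^sub>v v" unfolding v_def nrm_def
    by (simp add: mult_mat_vec[OF A v0(1)] v0(3) smult_smult_assoc mult.commute)
  interpret cof_vec_space ?n "TYPE(complex)" .
  define b where "b = basis_completion v"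
  from basis_completion[OF v vnz, folded b_def]
  have dist_b: "distinct b" and indep: "\<not> lin_dep (set b)" and b: "set b \<subseteq> carrier_vec ?n"
    and hdb: "hd b = v" and len_b: "length b = ?n" by auto
  from hdb len_b obtain vs where bv: "b = v # vs" by (cases b, auto)
  define ws where "ws = gram_schmidt ?n b"
  from gram_schmidt_result[OF b dist_b indep refl, folded ws_def]
  have ws: "set ws \<subseteq> carrier_vec ?n" "corthogonal ws" "length ws = ?n"
    by (auto simp: len_b)
  from gram_schmidt_hd[OF v, of vs, folded bv] have hdws: "hd ws = v" unfolding ws_def .
  define us where "us = map nrm ws"
  have us_len: "length us = ?n" unfolding us_def using ws by simp
  have wsi: "ws ! i \<in> carrier_vec ?n" if "i < ?n" for i using ws that by auto
  have wsnz: "ws ! i \<noteq> 0\<^sub>v ?n" if "i < ?n" for i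
  proof
    assume "ws ! i = 0\<^sub>v ?n"
    then have "ws ! i \<bullet>c ws ! i = 0" by simp
    then show False using ws(2) that ws(3) unfolding corthogonal_def by auto
  qed
  have usi: "us ! i = nrm (ws ! i)" if "i < ?n" for i unfolding us_def using that ws by simp
  have us_set: "set us \<subseteq> carrier_vec ?n" unfolding us_def using ws by auto
  have us_norm: "us ! i \<bullet>c us ! i = 1" if "i < ?n" for i
    using usi[OF that] nrm_self[OF wsi[OF that] wsnz[OF that]] by simp
  have us_orth0: "us ! i \<bullet>c us ! j = 0" if "i < ?n" "j < ?n" "i \<noteq> j" for i j
  proof -
    have "ws ! i \<bullet>c ws ! j = 0" using ws(2) that ws(3) unfolding corthogonal_def by auto
    then show ?thesis using usi[OF that(1)] usi[OF that(2)] unfolding nrm_def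
      by (simp add: cprod_smult[OF wsi[OF that(1)] wsi[OF that(2)]])
  qed
  have us_orth: "corthogonal us" unfolding corthogonal_def us_len
    using us_orth0 us_norm by auto
  have hdus: "hd us = v" unfolding us_def using ws(3) hdws nrm_id[OF v vv]
    by (cases ws) auto
  define W where "W = mat_of_cols ?n us"
  have W: "W \<in> carrier_mat ?n ?n" unfolding W_def using mat_of_cols_carrier(1)[of ?n us] us_len by simp
  have colW: "col W i = us ! i" if "i < ?n" for i unfolding W_def using that us_len us_set by (intro col_mat_of_cols) auto
  have WW: "mat_adjoint W * W = 1\<^sub>m ?n"
  proof (rule eq_matI)
    fix i j assume i: "i < dim_row (1\<^sub>m ?n :: complex mat)" and j: "j < dim_col (1\<^sub>m ?n :: complex mat)"
    then have i': "i < ?n" and j': "j < ?n" by auto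
    show "(mat_adjoint W * W) $$ (i, j) = 1\<^sub>m ?n $$ (i, j)"
      unfolding adj_mult_self_entry[OF W i' j'] colW[OF i'] colW[OF j']
      using us_norm[OF i'] us_orth0[OF j' i'] i' j' by auto
  qed (use W in auto)
  have WW2: "W * mat_adjoint W = 1\<^sub>m ?n"
    by (rule mat_mult_left_right_inverse[OF adj_carrier[OF W] W WW])
  define W' where "W' = corthogonal_inv W"
  have "W' \<in> carrier_mat (length (map vec_inv (cols W))) (dim_row W)"
    unfolding W'_def corthogonal_inv_def by (rule mat_of_rows_carrier(1))
  then have W': "W' \<in> carrier_mat ?n ?n" using W by simp
  have "inverts_mat W' W" unfolding W'_def W_def
    by (rule corthogonal_inv_result[OF orthogonal_mat_of_cols[OF us_set us_orth us_len]])
  then have W'W: "W' * W = 1\<^sub>m ?n" unfolding inverts_mat_def using W' by simp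
  have W'eq: "W' = mat_adjoint W"
  proof -
    have "W' = W' * (W * mat_adjoint W)" using W' by (simp add: WW2)
    also have "\<dots> = (W' * W) * mat_adjoint W" by (rule assoc_mult_mat[OF W' W adj_carrier[OF W], symmetric])
    also have "\<dots> = mat_adjoint W" using W by (simp add: W'W)
    finally show ?thesis .
  qed
  define B where "B = mat_adjoint W * A * W"
  have B: "B \<in> carrier_mat ?n ?n" unfolding B_def using W A by (meson adj_carrier mult_carrier_mat)
  have "col (W' * A * W) 0 = vec ?n (\<lambda> i. if i = 0 then e else 0)"
    unfolding W'_def W_def
    by (rule corthogonal_col_ev_0[OF A v vnz ev_v _ hdus us_set us_orth us_len]) simp
  then have col0: "col B 0 = vec ?n (\<lambda> i. if i = 0 then e else 0)"
    unfolding B_def W'eq .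
  obtain A1 A2 A0 A3 where splitB: "split_block B 1 1 = (A1,A2,A0,A3)"
    by (cases "split_block B 1 1", auto)
  have dimB: "dim_row B = 1 + m" "dim_col B = 1 + m" using B by auto
  from split_block[OF splitB dimB] have A1: "A1 \<in> carrier_mat 1 1" and A2: "A2 \<in> carrier_mat 1 m"
    and A0: "A0 \<in> carrier_mat m 1"
    and A3: "A3 \<in> carrier_mat m m" and Bblock: "B = four_block_mat A1 A2 A0 A3" by auto
  have A1id: "A1 = mat 1 1 (\<lambda> _. e)"
    using splitB[unfolded split_block_def Let_def] arg_cong[OF col0, of "\<lambda> v. v $ 0"] B
    by (auto simp: col_def)
  {
    fix i
    assume "i < m"
    with arg_cong[OF col0, of "\<lambda> v. v $ Suc i"] B
    have "B $$ (Suc i, 0) = 0" by auto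
  } note B0 = this
  have A0id: "A0 = 0\<^sub>m m 1"
    using splitB[unfolded split_block_def Let_def] B0 B by auto
  from Suc(1)[OF A3] obtain V T3 where V: "unitary m V" and T3: "T3 \<in> carrier_mat m m"
    and ut3: "upper_triangular T3" and A3eq: "A3 = V * T3 * mat_adjoint V" by blast
  from V have Vc: "V \<in> carrier_mat m m" and VV: "mat_adjoint V * V = 1\<^sub>m m"
    and VV2: "V * mat_adjoint V = 1\<^sub>m m" unfolding unitary_def by auto
  have one1: "1\<^sub>m 1 \<in> carrier_mat 1 1" by simp
  have z1: "0\<^sub>m 1 m \<in> carrier_mat 1 m" by simp
  have z2: "0\<^sub>m m 1 \<in> carrier_mat m 1" by simp
  have adjVc: "mat_adjoint V \<in> carrier_mat m m" using Vc by simp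
  have dims: "dim_row A1 = 1" "dim_col A1 = 1" "dim_row A2 = 1" "dim_col A2 = m"
    "dim_row V = m" "dim_col V = m" "dim_row T3 = m" "dim_col T3 = m"
    using A1 A2 Vc T3 by auto
  define F where "F = four_block_mat (1\<^sub>m 1) (0\<^sub>m 1 m) (0\<^sub>m m 1) V"
  define T where "T = four_block_mat A1 (A2 * V) (0\<^sub>m m 1) T3"
  have A2V: "A2 * V \<in> carrier_mat 1 m" using A2 Vc by (meson mult_carrier_mat)
  have F: "F \<in> carrier_mat ?n ?n" unfolding F_def
    using four_block_carrier_mat[OF one1 Vc] by simp
  have T: "T \<in> carrier_mat ?n ?n" unfolding T_def
    using four_block_carrier_mat[OF A1 T3] by simp
  have adjF: "mat_adjoint F = four_block_mat (1\<^sub>m 1) (0\<^sub>m 1 m) (0\<^sub>m m 1) (mat_adjoint V)"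
    unfolding F_def by (subst adj_four_block[OF one1 z1 z2 Vc]) simp
  have FF: "mat_adjoint F * F = 1\<^sub>m ?n"
  proof -
    have "mat_adjoint F * F = four_block_mat (1\<^sub>m 1 * 1\<^sub>m 1 + 0\<^sub>m 1 m * 0\<^sub>m m 1) (1\<^sub>m 1 * 0\<^sub>m 1 m + 0\<^sub>m 1 m * V)
       (0\<^sub>m m 1 * 1\<^sub>m 1 + mat_adjoint V * 0\<^sub>m m 1) (0\<^sub>m m 1 * 0\<^sub>m 1 m + mat_adjoint V * V)"
      unfolding adjF unfolding F_def by (rule mult_four_block_mat[OF one1 z1 z2 adjVc one1 z1 z2 Vc])
    also have "\<dots> = four_block_mat (1\<^sub>m 1) (0\<^sub>m 1 m) (0\<^sub>m m 1) (1\<^sub>m m)"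
      using Vc by (simp add: VV)
    also have "\<dots> = 1\<^sub>m ?n" by simp
    finally show ?thesis .
  qed
  define P where "P = W * F"
  have P: "P \<in> carrier_mat ?n ?n" unfolding P_def using W F by (meson mult_carrier_mat)
  have adjP: "mat_adjoint P = mat_adjoint F * mat_adjoint W" unfolding P_def by (rule adj_mult[OF W F])
  have adjWc: "mat_adjoint W \<in> carrier_mat ?n ?n" using W by simp
  have adjFc: "mat_adjoint F \<in> carrier_mat ?n ?n" using F by simp
  have WFc: "W * F \<in> carrier_mat ?n ?n" using W F by (meson mult_carrier_mat)
  have PP: "mat_adjoint P * P = 1\<^sub>m ?n"
  proof -
    have "mat_adjoint P * P = mat_adjoint F * mat_adjoint W * (W * F)"
      unfolding adjP unfolding P_def ..
    also have "\<dots> = mat_adjoint F * (mat_adjoint W * (W * F))"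
      by (rule assoc_mult_mat[OF adjFc adjWc WFc])
    also have "mat_adjoint W * (W * F) = (mat_adjoint W * W) * F"
      by (rule assoc_mult_mat[OF adjWc W F, symmetric])
    also have "\<dots> = F" using F by (simp add: WW)
    finally show ?thesis using FF by simp
  qed
  have PP2: "P * mat_adjoint P = 1\<^sub>m ?n"
    by (rule mat_mult_left_right_inverse[OF adj_carrier[OF P] P PP])
  have ut1: "upper_triangular A1" using A1 unfolding upper_triangular_def by auto
  have utT: "upper_triangular T" unfolding T_def
    by (rule upper_triangular_four_block[OF A1 T3 ut1 ut3])
  have FT: "F * T = four_block_mat A1 (A2 * V) (0\<^sub>m m 1) (V * T3)"
  proof -
    have "F * T = four_block_mat (1\<^sub>m 1 * A1 + 0\<^sub>m 1 m * 0\<^sub>m m 1) (1\<^sub>m 1 * (A2 * V) + 0\<^sub>m 1 m * T3)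
       (0\<^sub>m m 1 * A1 + V * 0\<^sub>m m 1) (0\<^sub>m m 1 * (A2 * V) + V * T3)"
      unfolding F_def T_def by (rule mult_four_block_mat[OF one1 z1 z2 Vc A1 A2V z2 T3])
    also have "\<dots> = four_block_mat A1 (A2 * V) (0\<^sub>m m 1) (V * T3)"
      using A1 A2V Vc T3 dims by simp
    finally show ?thesis .
  qed
  have VT3: "V * T3 \<in> carrier_mat m m" using Vc T3 by (meson mult_carrier_mat)
  have c1: "A2 * V * mat_adjoint V \<in> carrier_mat (Suc 0) m" using A2V adjVc by (simp add: mult_carrier_mat)
  have c2: "V * T3 * mat_adjoint V \<in> carrier_mat m m" using VT3 adjVc by (meson mult_carrier_mat)
  have FTF: "F * T * mat_adjoint F = B"
  proof -
    have "F * T * mat_adjoint F = four_block_mat (A1 * 1\<^sub>m 1 + (A2 * V) * 0\<^sub>m m 1) (A1 * 0\<^sub>m 1 m + (A2 * V) * mat_adjoint V)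
       (0\<^sub>m m 1 * 1\<^sub>m 1 + (V * T3) * 0\<^sub>m m 1) (0\<^sub>m m 1 * 0\<^sub>m 1 m + (V * T3) * mat_adjoint V)"
      unfolding FT adjF by (rule mult_four_block_mat[OF A1 A2V z2 VT3 one1 z1 z2 adjVc])
    also have "\<dots> = four_block_mat A1 (A2 * V * mat_adjoint V) (0\<^sub>m m 1) (V * T3 * mat_adjoint V)"
      using A1 A2 Vc T3 dims c1 c2 by (simp add: left_add_zero_mat[OF c1] left_add_zero_mat[OF c2])
    also have "A2 * V * mat_adjoint V = A2" using assoc_mult_mat[OF A2 Vc adjVc] VV2 A2 by simp
    also have "four_block_mat A1 A2 (0\<^sub>m m 1) (V * T3 * mat_adjoint V) = B" unfolding Bblock A0id A3eq ..
    finally show ?thesis .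
  qed
  have FTc: "F * T \<in> carrier_mat ?n ?n" using F T by (meson mult_carrier_mat)
  have WFTc: "W * (F * T) \<in> carrier_mat ?n ?n" using W FTc by (meson mult_carrier_mat)
  have adjWAc: "mat_adjoint W * A \<in> carrier_mat ?n ?n" using adjWc A by (meson mult_carrier_mat)
  have WadjWAc: "W * (mat_adjoint W * A) \<in> carrier_mat ?n ?n" using W adjWAc by (meson mult_carrier_mat)
  have "P * T * mat_adjoint P = W * (F * T) * (mat_adjoint F * mat_adjoint W)"
    unfolding adjP unfolding P_def by (simp only: assoc_mult_mat[OF W F T])
  also have "\<dots> = W * (F * T) * mat_adjoint F * mat_adjoint W"
    by (rule assoc_mult_mat[OF WFTc adjFc adjWc, symmetric])
  also have "W * (F * T) * mat_adjoint F = W * (F * T * mat_adjoint F)"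
    by (rule assoc_mult_mat[OF W FTc adjFc])
  also have "F * T * mat_adjoint F = mat_adjoint W * A * W" unfolding FTF B_def ..
  also have "W * (mat_adjoint W * A * W) = W * (mat_adjoint W * A) * W"
    by (rule assoc_mult_mat[OF W adjWAc W, symmetric])
  also have "W * (mat_adjoint W * A) = W * mat_adjoint W * A"
    by (rule assoc_mult_mat[OF W adjWc A, symmetric])
  also have "W * mat_adjoint W * A = A" using A by (simp add: WW2)
  also have "A * W * mat_adjoint W = A * (W * mat_adjoint W)"
    by (rule assoc_mult_mat[OF A W adjWc])
  also have "\<dots> = A" using A by (simp add: WW2)
  finally have "A = P * T * mat_adjoint P" ..
  moreover have "unitary ?n P" unfolding unitary_def using P PP PP2 by simp
  ultimately show ?case using T utT by blast
qed

lemma unitaryD: assumes "unitary n U"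
  shows "U \<in> carrier_mat n n" "mat_adjoint U \<in> carrier_mat n n" "mat_adjoint U * U = 1\<^sub>m n" "U * mat_adjoint U = 1\<^sub>m n"
  using assms unfolding unitary_def by auto

lemma sandwich_adj: fixes U X :: "complex mat"
  assumes U: "unitary n U" and X: "X \<in> carrier_mat n n"
  shows "mat_adjoint U * (U * X * mat_adjoint U) * U = X"
proof -
  note u = unitaryD[OF U]
  have UX: "U * X \<in> carrier_mat n n" using u X by (meson mult_carrier_mat)
  have UXU: "U * X * mat_adjoint U \<in> carrier_mat n n" using UX u by (meson mult_carrier_mat)
  have "mat_adjoint U * (U * X * mat_adjoint U) * U = mat_adjoint U * (U * X * mat_adjoint U * U)"
    by (rule assoc_mult_mat[OF u(2) UXU u(1)])
  also have "U * X * mat_adjoint U * U = U * X * (mat_adjoint U * U)"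
    by (rule assoc_mult_mat[OF UX u(2) u(1)])
  also have "\<dots> = U * X" unfolding u(3) by (rule right_mult_one_mat[OF UX])
  also have "mat_adjoint U * (U * X) = (mat_adjoint U * U) * X"
    by (rule assoc_mult_mat[OF u(2) u(1) X, symmetric])
  also have "\<dots> = X" unfolding u(3) by (rule left_mult_one_mat[OF X])
  finally show ?thesis .
qed

lemma adj_sandwich: fixes U X :: "complex mat"
  assumes U: "U \<in> carrier_mat n m" and X: "X \<in> carrier_mat m m"
  shows "mat_adjoint (U * X * mat_adjoint U) = U * mat_adjoint X * mat_adjoint U"
proof -
  have UX: "U * X \<in> carrier_mat n m" using U X by (meson mult_carrier_mat)
  have "mat_adjoint (U * X * mat_adjoint U) = U * mat_adjoint (U * X)"
    using adj_mult[OF UX adj_carrier[OF U]] by simp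
  also have "mat_adjoint (U * X) = mat_adjoint X * mat_adjoint U" by (rule adj_mult[OF U X])
  also have "U * (mat_adjoint X * mat_adjoint U) = U * mat_adjoint X * mat_adjoint U"
    by (rule assoc_mult_mat[OF U adj_carrier[OF X] adj_carrier[OF U], symmetric])
  finally show ?thesis .
qed

lemma hermitian_decomp: fixes A :: "complex mat"
  assumes A: "A \<in> carrier_mat n n" and h: "mat_adjoint A = A"
  shows "\<exists>U L. unitary n U \<and> L \<in> carrier_mat n n \<and> diagonal_mat L \<and> (\<forall>i<n. L $$ (i,i) \<in> \<real>)
    \<and> A = U * L * mat_adjoint U"
proof -
  from unitary_schur[OF A] obtain P T where P: "unitary n P" and T: "T \<in> carrier_mat n n"
    and ut: "upper_triangular T" and AT: "A = P * T * mat_adjoint P" by blast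
  note p = unitaryD[OF P]
  have Teq: "T = mat_adjoint P * A * P" using sandwich_adj[OF P T] AT by simp
  have "mat_adjoint T = mat_adjoint (mat_adjoint P * A * mat_adjoint (mat_adjoint P))"
    using Teq by simp
  also have "\<dots> = mat_adjoint P * mat_adjoint A * mat_adjoint (mat_adjoint P)"
    by (rule adj_sandwich[OF p(2) A])
  also have "\<dots> = T" using Teq h by simp
  finally have hT: "mat_adjoint T = T" .
  have Tij: "T $$ (i,j) = cnj (T $$ (j,i))" if "i < n" "j < n" for i j
  proof -
    have "T $$ (i,j) = mat_adjoint T $$ (i,j)" using hT by simp
    also have "\<dots> = cnj (T $$ (j,i))" using that T by simp
    finally show ?thesis .
  qed
  have diag: "diagonal_mat T" unfolding diagonal_mat_def
  proof (intro allI impI)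
    fix i j assume i: "i < dim_row T" and j: "j < dim_col T" and ij: "i \<noteq> j"
    have i': "i < n" and j': "j < n" using i j T by auto
    show "T $$ (i,j) = 0"
    proof (cases "j < i")
      case True then show ?thesis using ut i by (simp add: upper_triangular_def)
    next
      case False then have "i < j" using ij by simp
      then have "T $$ (j,i) = 0" using ut j' T by (simp add: upper_triangular_def)
      then show ?thesis using Tij[OF i' j'] by simp
    qed
  qed
  have real: "\<forall>i<n. T $$ (i,i) \<in> \<real>"
  proof (intro allI impI)
    fix i assume "i < n"
    from Tij[OF this this] show "T $$ (i,i) \<in> \<real>" unfolding Reals_cnj_iff by simp
  qed
  show ?thesis using P T diag real AT by blast
qed

lemma mat_eq_by_vec: fixes X Y :: "complex mat"
  assumes X: "X \<in> carrier_mat n m" and Y: "Y \<in> carrier_mat n m"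
    and eq: "\<And>x. x \<in> carrier_vec m \<Longrightarrow> X *\<^sub>v x = Y *\<^sub>v x"
  shows "X = Y"
proof (rule eq_matI)
  fix i j assume i: "i < dim_row Y" and j: "j < dim_col Y"
  have i': "i < n" and j': "j < m" using i j Y by auto
  have "X $$ (i,j) = (X *\<^sub>v unit_vec m j) $ i" using X i' j' by simp
  also have "\<dots> = (Y *\<^sub>v unit_vec m j) $ i" using eq[of "unit_vec m j"] by simp
  also have "\<dots> = Y $$ (i,j)" using Y i' j' by simp
  finally show "X $$ (i,j) = Y $$ (i,j)" .
qed (use X Y in auto)

definition dmat :: "nat \<Rightarrow> (complex \<Rightarrow> bool) \<Rightarrow> complex mat \<Rightarrow> complex mat" where
  "dmat n Q L = mat n n (\<lambda>(i,j). if i = j \<and> Q (L $$ (i,i)) then 1 else 0)"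

definition emat :: "nat \<Rightarrow> (complex \<Rightarrow> bool) \<Rightarrow> complex mat \<Rightarrow> complex mat" where
  "emat n Q L = mat n n (\<lambda>(i,j). if i = j \<and> Q (L $$ (i,i)) then L $$ (i,i) else 0)"

lemma dmat_carrier[simp]: "dmat n Q L \<in> carrier_mat n n" unfolding dmat_def by simp
lemma dmat_dims[simp]: "dim_row (dmat n Q L) = n" "dim_col (dmat n Q L) = n" unfolding dmat_def by simp_all
lemma emat_dims[simp]: "dim_row (emat n Q L) = n" "dim_col (emat n Q L) = n" unfolding emat_def by simp_all
lemma emat_carrier[simp]: "emat n Q L \<in> carrier_mat n n" unfolding emat_def by simp

lemma adj_dmat[simp]: "mat_adjoint (dmat n Q L) = dmat n Q L"
  unfolding dmat_def by (rule eq_matI) auto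

lemma L_dmat: fixes L :: "complex mat"
  assumes L: "L \<in> carrier_mat n n" and d: "diagonal_mat L"
  shows "L * dmat n Q L = emat n Q L" "dmat n Q L * L = emat n Q L"
proof -
  have Lij: "L $$ (i,j) = (if i = j then L $$ (i,i) else 0)" if "i < n" "j < n" for i j
    using d L that unfolding diagonal_mat_def by auto
  show "L * dmat n Q L = emat n Q L"
  proof (rule eq_matI)
    fix i j assume i: "i < dim_row (emat n Q L)" and j: "j < dim_col (emat n Q L)"
    have i': "i < n" and j': "j < n" using i j by (auto simp: emat_def)
    have "(L * dmat n Q L) $$ (i,j) = (\<Sum>k\<in>{0..<n}. L $$ (i,k) * (if k = j \<and> Q (L $$ (k,k)) then 1 else 0))"
      using L i' j' by (simp add: dmat_def scalar_prod_def row_def col_def)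
    also have "\<dots> = (\<Sum>k\<in>{0..<n}. if k = j then L $$ (i,j) * (if Q (L $$ (j,j)) then 1 else 0) else 0)"
      by (rule sum.cong) auto
    also have "\<dots> = L $$ (i,j) * (if Q (L $$ (j,j)) then 1 else 0)" using j' by (simp add: sum.delta)
    also have "\<dots> = emat n Q L $$ (i,j)" using i' j' Lij[OF i' j'] by (cases "i = j") (simp_all add: emat_def)
    finally show "(L * dmat n Q L) $$ (i,j) = emat n Q L $$ (i,j)" .
  qed (use L in \<open>auto simp: emat_def dmat_def\<close>)
  show "dmat n Q L * L = emat n Q L"
  proof (rule eq_matI)
    fix i j assume i: "i < dim_row (emat n Q L)" and j: "j < dim_col (emat n Q L)"
    have i': "i < n" and j': "j < n" using i j by (auto simp: emat_def)
    have "(dmat n Q L * L) $$ (i,j) = (\<Sum>k\<in>{0..<n}. (if i = k \<and> Q (L $$ (i,i)) then 1 else 0) * L $$ (k,j))"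
      using L i' j' by (simp add: dmat_def scalar_prod_def row_def col_def)
    also have "\<dots> = (\<Sum>k\<in>{0..<n}. if k = i then (if Q (L $$ (i,i)) then 1 else 0) * L $$ (i,j) else 0)"
      by (rule sum.cong) auto
    also have "\<dots> = (if Q (L $$ (i,i)) then 1 else 0) * L $$ (i,j)" using i' by (simp add: sum.delta)
    also have "\<dots> = emat n Q L $$ (i,j)" using i' j' Lij[OF i' j'] by (cases "i = j") (simp_all add: emat_def)
    finally show "(dmat n Q L * L) $$ (i,j) = emat n Q L $$ (i,j)" .
  qed (use L in \<open>auto simp: emat_def dmat_def\<close>)
qed

lemma diag_mult_vec: fixes L :: "complex mat"
  assumes L: "L \<in> carrier_mat n n" and d: "diagonal_mat L" and c: "c \<in> carrier_vec n" and i: "i < n"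
  shows "(L *\<^sub>v c) $ i = L $$ (i,i) * c $ i"
proof -
  have "(L *\<^sub>v c) $ i = (\<Sum>j\<in>{0..<n}. L $$ (i,j) * c $ j)"
    using L c i by (simp add: scalar_prod_def row_def)
  also have "\<dots> = (\<Sum>j\<in>{0..<n}. if j = i then L $$ (i,i) * c $ i else 0)"
    by (rule sum.cong) (use d L i in \<open>auto simp: diagonal_mat_def\<close>)
  also have "\<dots> = L $$ (i,i) * c $ i" using i by (simp add: sum.delta)
  finally show ?thesis .
qed

lemma dmat_diag: "diagonal_mat (dmat n Q L)" unfolding dmat_def diagonal_mat_def by simp

lemma mat_vec_zero: fixes U :: "complex mat" shows "U \<in> carrier_mat n m \<Longrightarrow> U *\<^sub>v 0\<^sub>v m = 0\<^sub>v n"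
  by (rule eq_vecI) (auto simp: scalar_prod_def)

lemma proj_char: fixes A U L P :: "complex mat"
  assumes U: "unitary n U" and L: "L \<in> carrier_mat n n" and d: "diagonal_mat L"
    and AL: "A = U * L * mat_adjoint U" and pr: "projector_onto_eigvecs n A Q P"
  shows "P = U * dmat n Q L * mat_adjoint U"
proof -
  note u = unitaryD[OF U]
  define Qm where "Qm = U * dmat n Q L * mat_adjoint U"
  have UD: "U * dmat n Q L \<in> carrier_mat n n" using u by (meson dmat_carrier mult_carrier_mat)
  have Qmc: "Qm \<in> carrier_mat n n" unfolding Qm_def using UD u by (meson mult_carrier_mat)
  have UL: "U * L \<in> carrier_mat n n" using u L by (meson mult_carrier_mat)
  have A: "A \<in> carrier_mat n n" unfolding AL using UL u by (meson mult_carrier_mat)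
  have vc[simp]: "U *\<^sub>v x \<in> carrier_vec n" "mat_adjoint U *\<^sub>v x \<in> carrier_vec n"
    "L *\<^sub>v x \<in> carrier_vec n" "dmat n Q L *\<^sub>v x \<in> carrier_vec n" "Qm *\<^sub>v x \<in> carrier_vec n"
    if "x \<in> carrier_vec n" for x
    using mult_mat_vec_carrier[OF u(1) that] mult_mat_vec_carrier[OF u(2) that] mult_mat_vec_carrier[OF L that]
      mult_mat_vec_carrier[OF dmat_carrier that] mult_mat_vec_carrier[OF Qmc that] by auto
  from pr have P: "P \<in> carrier_mat n n" "P * P = P" "mat_adjoint P = P"
    and rng: "{P *\<^sub>v x | x. x \<in> carrier_vec n} = cspan n {v. \<exists>k. Q k \<and> eigenvector A v k}"
    unfolding projector_onto_eigvecs_def orth_projector_def by auto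
  define S where "S = {v. \<exists>k. Q k \<and> eigenvector A v k}"
  interpret vs: vec_space "TYPE(complex)" n .
  have span_eq: "cspan n S = vs.span S" unfolding cspan_def ..
  have S_sub: "S \<subseteq> carrier_vec n" unfolding S_def eigenvector_def using A by auto
  have Av_eq: "A *\<^sub>v v = U *\<^sub>v (L *\<^sub>v (mat_adjoint U *\<^sub>v v))" if v: "v \<in> carrier_vec n" for v
  proof -
    have "A *\<^sub>v v = (U * L) *\<^sub>v (mat_adjoint U *\<^sub>v v)" unfolding AL by (rule assoc_mult_mat_vec[OF UL u(2) v])
    also have "\<dots> = U *\<^sub>v (L *\<^sub>v (mat_adjoint U *\<^sub>v v))"
      by (rule assoc_mult_mat_vec[OF u(1) L]) (use u v in simp)
    finally show ?thesis .
  qed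
  have UUv: "U *\<^sub>v (mat_adjoint U *\<^sub>v v) = v" if v: "v \<in> carrier_vec n" for v
  proof -
    have "U *\<^sub>v (mat_adjoint U *\<^sub>v v) = (U * mat_adjoint U) *\<^sub>v v" by (rule assoc_mult_mat_vec[symmetric, OF u(1) u(2) v])
    then show ?thesis using v by (simp add: u(4))
  qed
  have UUv2: "mat_adjoint U *\<^sub>v (U *\<^sub>v v) = v" if v: "v \<in> carrier_vec n" for v
  proof -
    have "mat_adjoint U *\<^sub>v (U *\<^sub>v v) = (mat_adjoint U * U) *\<^sub>v v" by (rule assoc_mult_mat_vec[symmetric, OF u(2) u(1) v])
    then show ?thesis using v by (simp add: u(3))
  qed
  have Qfix: "Qm *\<^sub>v v = v" if "v \<in> S" for v
  proof -
    from that obtain k where k: "Q k" and ev: "eigenvector A v k" unfolding S_def by auto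
    have v: "v \<in> carrier_vec n" and Av: "A *\<^sub>v v = k \<cdot>\<^sub>v v" using ev A unfolding eigenvector_def by auto
    define c where "c = mat_adjoint U *\<^sub>v v"
    have c: "c \<in> carrier_vec n" unfolding c_def using u v by simp
    have "L *\<^sub>v c = mat_adjoint U *\<^sub>v (U *\<^sub>v (L *\<^sub>v c))" using UUv2[of "L *\<^sub>v c"] L c by simp
    also have "U *\<^sub>v (L *\<^sub>v c) = k \<cdot>\<^sub>v v" using Av Av_eq[OF v] unfolding c_def by simp
    also have "mat_adjoint U *\<^sub>v (k \<cdot>\<^sub>v v) = k \<cdot>\<^sub>v c" unfolding c_def by (rule mult_mat_vec[OF u(2) v])
    finally have Lc: "L *\<^sub>v c = k \<cdot>\<^sub>v c" .
    have ci: "c $ i = 0 \<or> Q (L $$ (i,i))" if i: "i < n" for i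
    proof -
      have "L $$ (i,i) * c $ i = k * c $ i"
        using arg_cong[OF Lc, of "\<lambda>w. w $ i"] diag_mult_vec[OF L d c i] i c by simp
      then show ?thesis using k by auto
    qed
    have Dc: "dmat n Q L *\<^sub>v c = c"
    proof (rule eq_vecI)
      fix i assume "i < dim_vec c"
      then have i: "i < n" using c by simp
      show "(dmat n Q L *\<^sub>v c) $ i = c $ i"
        unfolding diag_mult_vec[OF dmat_carrier dmat_diag c i] using ci[OF i] i by (auto simp: dmat_def)
    qed (use c in simp)
    have "Qm *\<^sub>v v = U *\<^sub>v (dmat n Q L *\<^sub>v c)" unfolding Qm_def c_def
      using assoc_mult_mat_vec[OF UD u(2) v] assoc_mult_mat_vec[OF u(1) dmat_carrier, of "mat_adjoint U *\<^sub>v v"] u v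
      by simp
    also have "\<dots> = v" using Dc UUv[OF v] unfolding c_def by simp
    finally show ?thesis .
  qed
  define Wsub where "Wsub = {w \<in> carrier_vec n. Qm *\<^sub>v w = w}"
  have subm: "LinearCombinations.submodule class_ring Wsub (module_vec TYPE(complex) n)"
  proof (rule LinearCombinations.submodule.intro)
    show "Module.module class_ring (module_vec TYPE(complex) n)" by (rule vs.module_axioms)
    show "Wsub \<subseteq> carrier (module_vec TYPE(complex) n)" unfolding Wsub_def module_vec_simps by auto
    fix v w assume v: "v \<in> Wsub" and w: "w \<in> Wsub"
    then show "v \<oplus>\<^bsub>module_vec TYPE(complex) n\<^esub> w \<in> Wsub"
      unfolding Wsub_def module_vec_simps using Qmc by (simp add: mult_add_distrib_mat_vec[OF Qmc])
  next
    show "\<zero>\<^bsub>module_vec TYPE(complex) n\<^esub> \<in> Wsub"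
      unfolding Wsub_def module_vec_simps using mat_vec_zero[OF Qmc] by simp
  next
    fix a v assume v: "v \<in> Wsub"
    then show "a \<odot>\<^bsub>module_vec TYPE(complex) n\<^esub> v \<in> Wsub"
      unfolding Wsub_def module_vec_simps using mult_mat_vec[OF Qmc] by simp
  qed
  have spanW: "vs.span S \<subseteq> Wsub"
    by (rule vs.span_is_subset[OF _ subm]) (use Qfix S_sub in \<open>auto simp: Wsub_def\<close>)
  have QP: "Qm * P = P"
  proof (rule mat_eq_by_vec[of _ n n])
    show "Qm * P \<in> carrier_mat n n" using Qmc P by (meson mult_carrier_mat)
    show "P \<in> carrier_mat n n" by (rule P(1))
    fix x :: "complex vec" assume x: "x \<in> carrier_vec n"
    have "P *\<^sub>v x \<in> Wsub" using rng spanW x unfolding span_eq[symmetric] S_def[symmetric] by blast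
    then show "(Qm * P) *\<^sub>v x = P *\<^sub>v x" using assoc_mult_mat_vec[OF Qmc P(1) x] unfolding Wsub_def by simp
  qed
  have Pu: "P *\<^sub>v (U *\<^sub>v unit_vec n i) = U *\<^sub>v unit_vec n i" if i: "i < n" and qi: "Q (L $$ (i,i))" for i
  proof -
    define w where "w = U *\<^sub>v unit_vec n i"
    have w: "w \<in> carrier_vec n" unfolding w_def using u by simp
    have wnz: "w \<noteq> 0\<^sub>v n"
    proof
      assume "w = 0\<^sub>v n"
      then have "mat_adjoint U *\<^sub>v w = 0\<^sub>v n" using mat_vec_zero[OF u(2)] by simp
      moreover have "mat_adjoint U *\<^sub>v w = unit_vec n i" unfolding w_def by (rule UUv2) simp
      ultimately have "unit_vec n i $ i = (0\<^sub>v n :: complex vec) $ i" by simp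
      then show False using i by simp
    qed
    have Le: "L *\<^sub>v unit_vec n i = L $$ (i,i) \<cdot>\<^sub>v unit_vec n i"
    proof (rule eq_vecI)
      fix j assume "j < dim_vec (L $$ (i,i) \<cdot>\<^sub>v unit_vec n i)"
      then have j: "j < n" by simp
      show "(L *\<^sub>v unit_vec n i) $ j = (L $$ (i,i) \<cdot>\<^sub>v unit_vec n i) $ j"
        unfolding diag_mult_vec[OF L d unit_vec_carrier j] using i j by auto
    qed (use L in simp)
    have "A *\<^sub>v w = U *\<^sub>v (L *\<^sub>v unit_vec n i)" unfolding Av_eq[OF w] unfolding w_def
      using UUv2[of "unit_vec n i"] by simp
    also have "\<dots> = L $$ (i,i) \<cdot>\<^sub>v w" unfolding Le w_def by (rule mult_mat_vec[OF u(1)]) simp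
    finally have "eigenvector A w (L $$ (i,i))" unfolding eigenvector_def using w wnz A by auto
    then have "w \<in> S" unfolding S_def using qi by auto
    then have "w \<in> vs.span S" using vs.in_own_span[OF S_sub] by auto
    then obtain x where x: "x \<in> carrier_vec n" and wx: "w = P *\<^sub>v x"
      using rng unfolding span_eq[symmetric] S_def[symmetric] by blast
    have "P *\<^sub>v w = (P * P) *\<^sub>v x" unfolding wx by (rule assoc_mult_mat_vec[symmetric, OF P(1) P(1) x])
    also have "\<dots> = w" unfolding P(2) wx ..
    finally show ?thesis unfolding w_def .
  qed
  have PUD: "P * (U * dmat n Q L) = U * dmat n Q L"
  proof (rule mat_col_eqI)
    fix j assume "j < dim_col (U * dmat n Q L)"
    then have j: "j < n" using UD by simp
    have cd: "col (dmat n Q L) j = (if Q (L $$ (j,j)) then unit_vec n j else 0\<^sub>v n)"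
      by (rule eq_vecI) (use j in \<open>auto simp: dmat_def\<close>)
    have "col (P * (U * dmat n Q L)) j = P *\<^sub>v (U *\<^sub>v col (dmat n Q L) j)"
      using col_mult2[OF P(1) UD j] col_mult2[OF u(1) dmat_carrier j] by simp
    also have "\<dots> = U *\<^sub>v col (dmat n Q L) j"
      unfolding cd using Pu[OF j] mat_vec_zero[OF u(1)] mat_vec_zero[OF P(1)] by auto
    also have "\<dots> = col (U * dmat n Q L) j" using col_mult2[OF u(1) dmat_carrier j] by simp
    finally show "col (P * (U * dmat n Q L)) j = col (U * dmat n Q L) j" .
  qed (use P UD in auto)
  have PQ: "P * Qm = Qm"
  proof -
    have "P * Qm = P * (U * dmat n Q L) * mat_adjoint U" unfolding Qm_def
      by (rule assoc_mult_mat[symmetric, OF P(1) UD u(2)])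
    then show ?thesis unfolding PUD Qm_def .
  qed
  have adjQ: "mat_adjoint Qm = Qm" unfolding Qm_def adj_sandwich[OF u(1) dmat_carrier] adj_dmat ..
  have "P = mat_adjoint (Qm * P)" using P(3) QP by simp
  also have "\<dots> = mat_adjoint P * mat_adjoint Qm" by (rule adj_mult[OF Qmc P(1)])
  also have "\<dots> = Qm" using P(3) adjQ PQ by simp
  finally show ?thesis unfolding Qm_def .
qed

lemma sandwich_entry: fixes U X :: "complex mat"
  assumes U: "U \<in> carrier_mat n m" and X: "X \<in> carrier_mat n n" and i: "i < m" and j: "j < m"
  shows "(mat_adjoint U * X * U) $$ (i,j) = conjugate (col U i) \<bullet> (X *\<^sub>v col U j)"
proof -
  have XU: "X * U \<in> carrier_mat n m" using X U by (meson mult_carrier_mat)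
  have "mat_adjoint U * X * U = mat_adjoint U * (X * U)" by (rule assoc_mult_mat[OF adj_carrier[OF U] X U])
  moreover have "row (mat_adjoint U) i = conjugate (col U i)"
    by (rule eq_vecI) (use U i in auto)
  moreover have "col (X * U) j = X *\<^sub>v col U j" by (rule col_mult2[OF X U j])
  ultimately show ?thesis using U X i j by simp
qed

lemma mtrace_diag: fixes M E :: "complex mat"
  assumes M: "M \<in> carrier_mat n n" and E: "E \<in> carrier_mat n n" and d: "diagonal_mat E"
  shows "mtrace (M * E) = (\<Sum>i\<in>{0..<n}. M $$ (i,i) * E $$ (i,i))"
proof -
  have "(M * E) $$ (i,i) = M $$ (i,i) * E $$ (i,i)" if i: "i < n" for i
  proof -
    have "(M * E) $$ (i,i) = (\<Sum>k\<in>{0..<n}. M $$ (i,k) * E $$ (k,i))"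
      using M E i by (simp add: scalar_prod_def row_def col_def)
    also have "\<dots> = (\<Sum>k\<in>{0..<n}. if k = i then M $$ (i,i) * E $$ (i,i) else 0)"
      by (rule sum.cong) (use d E i in \<open>auto simp: diagonal_mat_def\<close>)
    also have "\<dots> = M $$ (i,i) * E $$ (i,i)" using i by (simp add: sum.delta)
    finally show ?thesis .
  qed
  then show ?thesis unfolding mtrace_def using M by simp
qed

lemma trace_sandwich: fixes X U E :: "complex mat"
  assumes U: "unitary n U" and E: "E \<in> carrier_mat n n" and d: "diagonal_mat E" and X: "X \<in> carrier_mat n n"
  shows "mtrace (X * (U * E * mat_adjoint U)) = (\<Sum>i\<in>{0..<n}. (conjugate (col U i) \<bullet> (X *\<^sub>v col U i)) * E $$ (i,i))"
proof -
  note u = unitaryD[OF U]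
  have UE: "U * E \<in> carrier_mat n n" using u E by (meson mult_carrier_mat)
  have XUE: "X * (U * E) \<in> carrier_mat n n" using X UE by (meson mult_carrier_mat)
  have XU: "X * U \<in> carrier_mat n n" using X u by (meson mult_carrier_mat)
  have M: "mat_adjoint U * X * U \<in> carrier_mat n n" using X u by (meson mult_carrier_mat)
  have "X * (U * E * mat_adjoint U) = X * (U * E) * mat_adjoint U"
    by (rule assoc_mult_mat[symmetric, OF X UE u(2)])
  then have "mtrace (X * (U * E * mat_adjoint U)) = mtrace (mat_adjoint U * (X * (U * E)))"
    using mtrace_comm[OF XUE u(2)] by simp
  also have "X * (U * E) = X * U * E" by (rule assoc_mult_mat[symmetric, OF X u(1) E])
  also have "mat_adjoint U * (X * U * E) = mat_adjoint U * (X * U) * E"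
    by (rule assoc_mult_mat[symmetric, OF u(2) XU E])
  also have "mat_adjoint U * (X * U) = mat_adjoint U * X * U"
    by (rule assoc_mult_mat[symmetric, OF u(2) X u(1)])
  also have "mtrace (mat_adjoint U * X * U * E) = (\<Sum>i\<in>{0..<n}. (mat_adjoint U * X * U) $$ (i,i) * E $$ (i,i))"
    by (rule mtrace_diag[OF M E d])
  also have "\<dots> = (\<Sum>i\<in>{0..<n}. (conjugate (col U i) \<bullet> (X *\<^sub>v col U i)) * E $$ (i,i))"
    by (rule sum.cong) (simp_all add: sandwich_entry[OF u(1) X])
  finally show ?thesis .
qed

lemma trace_nonneg: fixes X U E :: "complex mat"
  assumes U: "unitary n U" and E: "E \<in> carrier_mat n n" and d: "diagonal_mat E" and X: "X \<in> carrier_mat n n"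
    and Ei: "\<And>i. i < n \<Longrightarrow> E $$ (i,i) \<ge> 0"
    and Xi: "\<And>i. i < n \<Longrightarrow> conjugate (col U i) \<bullet> (X *\<^sub>v col U i) \<ge> 0"
  shows "mtrace (X * (U * E * mat_adjoint U)) \<ge> 0"
  unfolding trace_sandwich[OF U E d X]
  by (rule sum_nonneg) (simp add: Ei Xi mult_nonneg_nonneg)

lemma trace_nonpos: fixes X U E :: "complex mat"
  assumes U: "unitary n U" and E: "E \<in> carrier_mat n n" and d: "diagonal_mat E" and X: "X \<in> carrier_mat n n"
    and Ei: "\<And>i. i < n \<Longrightarrow> E $$ (i,i) \<le> 0"
    and Xi: "\<And>i. i < n \<Longrightarrow> conjugate (col U i) \<bullet> (X *\<^sub>v col U i) \<ge> 0"
  shows "mtrace (X * (U * E * mat_adjoint U)) \<le> 0"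
  unfolding trace_sandwich[OF U E d X]
  by (rule sum_nonpos) (simp add: Ei Xi mult_nonneg_nonpos)

lemma density_bound: fixes \<rho> :: "complex mat"
  assumes den: "density_mat n \<rho>" and u: "u \<in> carrier_vec n" and uu: "conjugate u \<bullet> u = 1"
  shows "conjugate u \<bullet> ((1\<^sub>m n - \<rho>) *\<^sub>v u) \<ge> 0"
proof -
  from den have R: "\<rho> \<in> carrier_mat n n" and h: "mat_adjoint \<rho> = \<rho>"
    and psd: "\<And>v. v \<in> carrier_vec n \<Longrightarrow> 0 \<le> conjugate v \<bullet> (\<rho> *\<^sub>v v)" and tr: "mtrace \<rho> = 1"
    unfolding density_mat_def psd_mat_def by auto
  from hermitian_decomp[OF R h] obtain V M where V: "unitary n V" and M: "M \<in> carrier_mat n n"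
    and d: "diagonal_mat M" and RM: "\<rho> = V * M * mat_adjoint V" by blast
  note v = unitaryD[OF V]
  have Meq: "M = mat_adjoint V * \<rho> * V" using sandwich_adj[OF V M] RM by simp
  have Mjj: "M $$ (j,j) \<ge> 0" if j: "j < n" for j
    unfolding Meq sandwich_entry[OF v(1) R j j] using psd[of "col V j"] v(1) j by simp
  have VM: "V * M \<in> carrier_mat n n" using v M by (meson mult_carrier_mat)
  have RV: "\<rho> * V \<in> carrier_mat n n" using v R by (meson mult_carrier_mat)
  have trM: "mtrace M = 1"
  proof -
    have "mtrace M = mtrace (mat_adjoint V * (\<rho> * V))"
      unfolding Meq by (simp add: assoc_mult_mat[OF v(2) R v(1)])
    also have "\<dots> = mtrace (\<rho> * V * mat_adjoint V)" by (rule mtrace_comm[OF v(2) RV])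
    also have "\<rho> * V * mat_adjoint V = \<rho>" using assoc_mult_mat[OF R v(1) v(2)] v(4) R by simp
    finally show ?thesis using tr by simp
  qed
  define w where "w = mat_adjoint V *\<^sub>v u"
  have w: "w \<in> carrier_vec n" unfolding w_def using mult_mat_vec_carrier[OF v(2) u] .
  have Vw: "V *\<^sub>v w = u" unfolding w_def
    using assoc_mult_mat_vec[OF v(1) v(2) u] v(4) u by simp
  have Mw: "M *\<^sub>v w \<in> carrier_vec n" using mult_mat_vec_carrier[OF M w] .
  have Ru: "\<rho> *\<^sub>v u = V *\<^sub>v (M *\<^sub>v w)"
  proof -
    have "\<rho> *\<^sub>v u = (V * M) *\<^sub>v w" unfolding RM w_def by (rule assoc_mult_mat_vec[OF VM v(2) u])
    also have "\<dots> = V *\<^sub>v (M *\<^sub>v w)" by (rule assoc_mult_mat_vec[OF v(1) M w])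
    finally show ?thesis .
  qed
  have q: "conjugate u \<bullet> (\<rho> *\<^sub>v u) = (\<Sum>j\<in>{0..<n}. M $$ (j,j) * (cnj (w $ j) * w $ j))"
  proof -
    have e: "conjugate u \<bullet> (V *\<^sub>v (M *\<^sub>v w)) = conjugate (mat_adjoint V *\<^sub>v u) \<bullet> (M *\<^sub>v w)"
      by (rule adj_sprod[OF v(1) u Mw])
    have "conjugate u \<bullet> (\<rho> *\<^sub>v u) = conjugate w \<bullet> (M *\<^sub>v w)"
      unfolding Ru using e unfolding w_def[symmetric] .
    also have "\<dots> = (\<Sum>j\<in>{0..<n}. conjugate w $ j * (M *\<^sub>v w) $ j)"
      unfolding scalar_prod_def carrier_vecD[OF Mw] ..
    also have "\<dots> = (\<Sum>j\<in>{0..<n}. cnj (w $ j) * (M $$ (j,j) * w $ j))"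
    proof (rule sum.cong)
      fix j assume "j \<in> {0..<n}"
      then have j: "j < n" by simp
      show "conjugate w $ j * (M *\<^sub>v w) $ j = cnj (w $ j) * (M $$ (j,j) * w $ j)"
        unfolding diag_mult_vec[OF M d w j] using w j by simp
    qed simp
    also have "\<dots> = (\<Sum>j\<in>{0..<n}. M $$ (j,j) * (cnj (w $ j) * w $ j))"
      by (rule sum.cong) (simp_all add: ac_simps)
    finally show ?thesis .
  qed
  have ww: "(\<Sum>j\<in>{0..<n}. cnj (w $ j) * w $ j) = 1"
  proof -
    have e: "conjugate u \<bullet> (V *\<^sub>v w) = conjugate (mat_adjoint V *\<^sub>v u) \<bullet> w"
      by (rule adj_sprod[OF v(1) u w])
    have "conjugate w \<bullet> w = conjugate u \<bullet> (V *\<^sub>v w)"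
      using e unfolding w_def[symmetric] by simp
    then have "conjugate w \<bullet> w = 1" using Vw uu by simp
    then show ?thesis using w by (simp add: scalar_prod_def)
  qed
  have nn: "cnj (w $ j) * w $ j \<ge> 0" for j
    using conjugate_square_positive[of "w $ j"] by (simp add: mult.commute)
  have le1: "cnj (w $ j) * w $ j \<le> 1" if j: "j < n" for j
  proof -
    have "cnj (w $ j) * w $ j \<le> (\<Sum>j\<in>{0..<n}. cnj (w $ j) * w $ j)"
      by (rule member_le_sum) (use j nn in auto)
    then show ?thesis using ww by simp
  qed
  have "conjugate u \<bullet> (\<rho> *\<^sub>v u) \<le> (\<Sum>j\<in>{0..<n}. M $$ (j,j))"
    unfolding q
  proof (rule sum_mono)
    fix j assume "j \<in> {0..<n}"
    then have j: "j < n" by simp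
    show "M $$ (j,j) * (cnj (w $ j) * w $ j) \<le> M $$ (j,j)"
      using mult_left_mono[OF le1[OF j] Mjj[OF j]] by simp
  qed
  also have "\<dots> = 1" using trM M unfolding mtrace_def by simp
  finally have q1: "conjugate u \<bullet> (\<rho> *\<^sub>v u) \<le> 1" .
  have Ruc: "\<rho> *\<^sub>v u \<in> carrier_vec n" using mult_mat_vec_carrier[OF R u] .
  have "conjugate u \<bullet> ((1\<^sub>m n - \<rho>) *\<^sub>v u) = conjugate u \<bullet> (u - \<rho> *\<^sub>v u)"
    using minus_mult_distrib_mat_vec[OF one_carrier_mat R u] u by simp
  also have "\<dots> = conjugate u \<bullet> u - conjugate u \<bullet> (\<rho> *\<^sub>v u)"
    by (rule scalar_prod_minus_distrib[OF _ u Ruc]) (use u in simp)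
  finally show ?thesis using q1 uu by simp
qed

lemma sandwich_mult: fixes U X Y :: "complex mat"
  assumes U: "unitary n U" and X: "X \<in> carrier_mat n n" and Y: "Y \<in> carrier_mat n n"
  shows "(U * X * mat_adjoint U) * (U * Y * mat_adjoint U) = U * (X * Y) * mat_adjoint U"
proof -
  note u = unitaryD[OF U]
  have UX: "U * X \<in> carrier_mat n n" using u X by (meson mult_carrier_mat)
  have UY: "U * Y \<in> carrier_mat n n" using u Y by (meson mult_carrier_mat)
  have UXU: "U * X * mat_adjoint U \<in> carrier_mat n n" using UX u by (meson mult_carrier_mat)
  have "(U * X * mat_adjoint U) * (U * Y * mat_adjoint U) = (U * X * mat_adjoint U) * (U * Y) * mat_adjoint U"
    by (rule assoc_mult_mat[symmetric, OF UXU UY u(2)])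
  also have "(U * X * mat_adjoint U) * (U * Y) = (U * X * mat_adjoint U) * U * Y"
    by (rule assoc_mult_mat[symmetric, OF UXU u(1) Y])
  also have "(U * X * mat_adjoint U) * U = U * X * (mat_adjoint U * U)"
    by (rule assoc_mult_mat[OF UX u(2) u(1)])
  also have "\<dots> = U * X" unfolding u(3) by (rule right_mult_one_mat[OF UX])
  also have "U * X * Y = U * (X * Y)" by (rule assoc_mult_mat[OF u(1) X Y])
  finally show ?thesis .
qed

lemma tr_diff_right: fixes A B C1 C2 :: "complex mat"
  assumes A: "A \<in> carrier_mat n n" and B: "B \<in> carrier_mat n n" and C1: "C1 \<in> carrier_mat n n" and C2: "C2 \<in> carrier_mat n n"
  shows "mtrace (A * B * C1) - mtrace (A * B * C2) = mtrace (A * B * (C1 - C2))"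
proof -
  have AB: "A * B \<in> carrier_mat n n" using A B by (meson mult_carrier_mat)
  have "A * B * (C1 - C2) = A * B * C1 - A * B * C2" by (rule mult_minus_distrib_mat[OF AB C1 C2])
  moreover have "A * B * C1 \<in> carrier_mat n n" "A * B * C2 \<in> carrier_mat n n"
    using AB C1 C2 by (meson mult_carrier_mat)+
  ultimately show ?thesis using mtrace_minus by simp
qed

lemma tr_diff_mid: fixes A B1 B2 C :: "complex mat"
  assumes A: "A \<in> carrier_mat n n" and B1: "B1 \<in> carrier_mat n n" and B2: "B2 \<in> carrier_mat n n" and C: "C \<in> carrier_mat n n"
  shows "mtrace (A * B1 * C) - mtrace (A * B2 * C) = mtrace (A * (B1 - B2) * C)"
proof -
  have AB1: "A * B1 \<in> carrier_mat n n" using A B1 by (meson mult_carrier_mat)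
  have AB2: "A * B2 \<in> carrier_mat n n" using A B2 by (meson mult_carrier_mat)
  have "A * (B1 - B2) = A * B1 - A * B2" by (rule mult_minus_distrib_mat[OF A B1 B2])
  moreover have "(A * B1 - A * B2) * C = A * B1 * C - A * B2 * C" by (rule minus_mult_distrib_mat[OF AB1 AB2 C])
  moreover have "A * B1 * C \<in> carrier_mat n n" "A * B2 * C \<in> carrier_mat n n"
    using AB1 AB2 C by (meson mult_carrier_mat)+
  ultimately show ?thesis using mtrace_minus by simp
qed

lemma tr_cyc: fixes A B C :: "complex mat"
  assumes A: "A \<in> carrier_mat n n" and B: "B \<in> carrier_mat n n" and C: "C \<in> carrier_mat n n"
  shows "mtrace (A * B * C) = mtrace (B * (C * A))"
proof -
  have BC: "B * C \<in> carrier_mat n n" using B C by (meson mult_carrier_mat)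
  have "mtrace (A * B * C) = mtrace (A * (B * C))" using assoc_mult_mat[OF A B C] by simp
  also have "\<dots> = mtrace (B * C * A)" by (rule mtrace_comm[OF A BC])
  also have "B * C * A = B * (C * A)" by (rule assoc_mult_mat[OF B C A])
  finally show ?thesis .
qed

lemma tr_cyc2: fixes A B C :: "complex mat"
  assumes A: "A \<in> carrier_mat n n" and B: "B \<in> carrier_mat n n" and C: "C \<in> carrier_mat n n"
  shows "mtrace (A * B * C) = mtrace (C * (A * B))"
proof -
  have AB: "A * B \<in> carrier_mat n n" using A B by (meson mult_carrier_mat)
  show ?thesis by (rule mtrace_comm[OF AB C])
qed

lemma emat_diag: "diagonal_mat (emat n Q L)" unfolding emat_def diagonal_mat_def by simp

lemma unitary_col_norm: fixes U :: "complex mat"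
  assumes U: "unitary n U" and i: "i < n"
  shows "col U i \<in> carrier_vec n" "conjugate (col U i) \<bullet> col U i = 1"
proof -
  note u = unitaryD[OF U]
  show c: "col U i \<in> carrier_vec n" using u(1) i by simp
  have "(mat_adjoint U * 1\<^sub>m n * U) $$ (i,i) = conjugate (col U i) \<bullet> (1\<^sub>m n *\<^sub>v col U i)"
    by (rule sandwich_entry[OF u(1) one_carrier_mat i i])
  moreover have "mat_adjoint U * 1\<^sub>m n * U = 1\<^sub>m n" using u by simp
  ultimately show "conjugate (col U i) \<bullet> col U i = 1" using c i by simp
qed

theorem lemma1:
  fixes N :: nat and \<rho>1 \<rho>2 Pp Pm :: "complex mat"
  assumes "density_mat N \<rho>1" and "density_mat N \<rho>2"
    and "projector_onto_eigvecs N (\<rho>1 - \<rho>2) (\<lambda>k. k > 0) Pp"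
    and "projector_onto_eigvecs N (\<rho>1 - \<rho>2) (\<lambda>k. k < 0) Pm"
  shows "mtrace (Pp * (1\<^sub>m N - \<rho>1) * \<rho>1) \<ge> mtrace (Pp * (1\<^sub>m N - \<rho>1) * \<rho>2) \<and>
      mtrace (Pm * \<rho>1 * (1\<^sub>m N - \<rho>1)) \<ge> mtrace (Pm * \<rho>1 * (1\<^sub>m N - \<rho>2)) \<and>
      mtrace (Pp * (1\<^sub>m N - \<rho>2) * \<rho>2) \<ge> mtrace (Pp * (1\<^sub>m N - \<rho>1) * \<rho>2) \<and>
      mtrace (Pm * \<rho>2 * (1\<^sub>m N - \<rho>2)) \<ge> mtrace (Pm * \<rho>1 * (1\<^sub>m N - \<rho>2))"
proof -
  from assms(1) have R1: "\<rho>1 \<in> carrier_mat N N" "mat_adjoint \<rho>1 = \<rho>1"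
    and psd1: "\<And>v. v \<in> carrier_vec N \<Longrightarrow> 0 \<le> conjugate v \<bullet> (\<rho>1 *\<^sub>v v)"
    unfolding density_mat_def psd_mat_def by auto
  from assms(2) have R2: "\<rho>2 \<in> carrier_mat N N" "mat_adjoint \<rho>2 = \<rho>2"
    and psd2: "\<And>v. v \<in> carrier_vec N \<Longrightarrow> 0 \<le> conjugate v \<bullet> (\<rho>2 *\<^sub>v v)"
    unfolding density_mat_def psd_mat_def by auto
  define D where "D = \<rho>1 - \<rho>2"
  have Dc: "D \<in> carrier_mat N N" unfolding D_def by (rule minus_carrier_mat[OF R2(1)])
  have hD: "mat_adjoint D = D" unfolding D_def adj_minus[OF R1(1) R2(1)] R1 R2 ..
  from hermitian_decomp[OF Dc hD] obtain U L where U: "unitary N U" and L: "L \<in> carrier_mat N N"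
    and d: "diagonal_mat L" and DL: "D = U * L * mat_adjoint U" by blast
  note u = unitaryD[OF U]
  define dp where "dp = dmat N (\<lambda>k. k > 0) L"
  define dm where "dm = dmat N (\<lambda>k. k < 0) L"
  define Ep where "Ep = emat N (\<lambda>k. k > 0) L"
  define Em where "Em = emat N (\<lambda>k. k < 0) L"
  have Pp: "Pp = U * dp * mat_adjoint U" unfolding dp_def
    by (rule proj_char[OF U L d DL assms(3)[folded D_def]])
  have Pm: "Pm = U * dm * mat_adjoint U" unfolding dm_def
    by (rule proj_char[OF U L d DL assms(4)[folded D_def]])
  have Ppc: "Pp \<in> carrier_mat N N" unfolding Pp dp_def using u by (meson dmat_carrier mult_carrier_mat)
  have Pmc: "Pm \<in> carrier_mat N N" unfolding Pm dm_def using u by (meson dmat_carrier mult_carrier_mat)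
  have DPp: "D * Pp = U * Ep * mat_adjoint U"
    unfolding DL Pp sandwich_mult[OF U L dmat_carrier] dp_def Ep_def L_dmat[OF L d] ..
  have PpD: "Pp * D = U * Ep * mat_adjoint U"
    unfolding DL Pp sandwich_mult[OF U dmat_carrier L] dp_def Ep_def L_dmat[OF L d] ..
  have DPm: "D * Pm = U * Em * mat_adjoint U"
    unfolding DL Pm sandwich_mult[OF U L dmat_carrier] dm_def Em_def L_dmat[OF L d] ..
  have PmD: "Pm * D = U * Em * mat_adjoint U"
    unfolding DL Pm sandwich_mult[OF U dmat_carrier L] dm_def Em_def L_dmat[OF L d] ..
  have Epc: "Ep \<in> carrier_mat N N" "diagonal_mat Ep" unfolding Ep_def by (simp_all add: emat_diag)
  have Emc: "Em \<in> carrier_mat N N" "diagonal_mat Em" unfolding Em_def by (simp_all add: emat_diag)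
  have Epi: "Ep $$ (i,i) \<ge> 0" if "i < N" for i using that unfolding Ep_def emat_def by auto
  have Emi: "Em $$ (i,i) \<le> 0" if "i < N" for i using that unfolding Em_def emat_def by auto
  have X1: "1\<^sub>m N - \<rho>1 \<in> carrier_mat N N" by (rule minus_carrier_mat[OF R1(1)])
  have X2: "1\<^sub>m N - \<rho>2 \<in> carrier_mat N N" by (rule minus_carrier_mat[OF R2(1)])
  have cR1: "conjugate (col U i) \<bullet> (\<rho>1 *\<^sub>v col U i) \<ge> 0" if "i < N" for i
    using psd1 unitary_col_norm[OF U that] by simp
  have cR2: "conjugate (col U i) \<bullet> (\<rho>2 *\<^sub>v col U i) \<ge> 0" if "i < N" for i
    using psd2 unitary_col_norm[OF U that] by simp
  have cX1: "conjugate (col U i) \<bullet> ((1\<^sub>m N - \<rho>1) *\<^sub>v col U i) \<ge> 0" if "i < N" for i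
    using density_bound[OF assms(1)] unitary_col_norm[OF U that] by simp
  have cX2: "conjugate (col U i) \<bullet> ((1\<^sub>m N - \<rho>2) *\<^sub>v col U i) \<ge> 0" if "i < N" for i
    using density_bound[OF assms(2)] unitary_col_norm[OF U that] by simp
  have XX: "(1\<^sub>m N - \<rho>2) - (1\<^sub>m N - \<rho>1) = D" unfolding D_def
    by (rule eq_matI) (use R1 R2 in auto)
  have i1: "mtrace (Pp * (1\<^sub>m N - \<rho>1) * \<rho>1) - mtrace (Pp * (1\<^sub>m N - \<rho>1) * \<rho>2) \<ge> 0"
  proof -
    have "mtrace (Pp * (1\<^sub>m N - \<rho>1) * \<rho>1) - mtrace (Pp * (1\<^sub>m N - \<rho>1) * \<rho>2)
        = mtrace (Pp * (1\<^sub>m N - \<rho>1) * D)" unfolding D_def by (rule tr_diff_right[OF Ppc X1 R1(1) R2(1)])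
    also have "\<dots> = mtrace ((1\<^sub>m N - \<rho>1) * (D * Pp))" by (rule tr_cyc[OF Ppc X1 Dc])
    also have "\<dots> \<ge> 0" unfolding DPp by (rule trace_nonneg[OF U Epc X1 Epi cX1])
    finally show ?thesis .
  qed
  have i2: "mtrace (Pm * \<rho>1 * (1\<^sub>m N - \<rho>2)) - mtrace (Pm * \<rho>1 * (1\<^sub>m N - \<rho>1)) \<le> 0"
  proof -
    have "mtrace (Pm * \<rho>1 * (1\<^sub>m N - \<rho>2)) - mtrace (Pm * \<rho>1 * (1\<^sub>m N - \<rho>1))
        = mtrace (Pm * \<rho>1 * D)" unfolding XX[symmetric] by (rule tr_diff_right[OF Pmc R1(1) X2 X1])
    also have "\<dots> = mtrace (\<rho>1 * (D * Pm))" by (rule tr_cyc[OF Pmc R1(1) Dc])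
    also have "\<dots> \<le> 0" unfolding DPm by (rule trace_nonpos[OF U Emc R1(1) Emi cR1])
    finally show ?thesis .
  qed
  have i3: "mtrace (Pp * (1\<^sub>m N - \<rho>2) * \<rho>2) - mtrace (Pp * (1\<^sub>m N - \<rho>1) * \<rho>2) \<ge> 0"
  proof -
    have "mtrace (Pp * (1\<^sub>m N - \<rho>2) * \<rho>2) - mtrace (Pp * (1\<^sub>m N - \<rho>1) * \<rho>2)
        = mtrace (Pp * D * \<rho>2)" unfolding XX[symmetric] by (rule tr_diff_mid[OF Ppc X2 X1 R2(1)])
    also have "\<dots> = mtrace (\<rho>2 * (Pp * D))" by (rule tr_cyc2[OF Ppc Dc R2(1)])
    also have "\<dots> \<ge> 0" unfolding PpD by (rule trace_nonneg[OF U Epc R2(1) Epi cR2])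
    finally show ?thesis .
  qed
  have i4: "mtrace (Pm * \<rho>1 * (1\<^sub>m N - \<rho>2)) - mtrace (Pm * \<rho>2 * (1\<^sub>m N - \<rho>2)) \<le> 0"
  proof -
    have "mtrace (Pm * \<rho>1 * (1\<^sub>m N - \<rho>2)) - mtrace (Pm * \<rho>2 * (1\<^sub>m N - \<rho>2))
        = mtrace (Pm * D * (1\<^sub>m N - \<rho>2))" unfolding D_def by (rule tr_diff_mid[OF Pmc R1(1) R2(1) X2])
    also have "\<dots> = mtrace ((1\<^sub>m N - \<rho>2) * (Pm * D))" by (rule tr_cyc2[OF Pmc Dc X2])
    also have "\<dots> \<le> 0" unfolding PmD by (rule trace_nonpos[OF U Emc X2 Emi cX2])
    finally show ?thesis .
  qed
  from i1 i2 i3 i4 show ?thesis by simp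
qed
end
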